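(* For real $\alpha,\beta$, the inequalities $H_{\alpha }(\cosh x) <\frac{\sinh x}{x}<H_{\beta }(\cosh x)$ hold for all $x\in(0,\infty)$ if and only if $\alpha \leq 0$ and $\beta \geq 3/5$.
   Context: For $t>0$ define $H_{r}(t) =\left( \frac{\sqrt{8+t^{2r}}+t^{r}}{4}\right) ^{1/r}$ if $r\neq 0$ and $H_{0}(t) =t^{1/3}$. *)

theory Defs
  imports Complex_Main
begin

definition H :: "real \<Rightarrow> real \<Rightarrow> real" where
  "H r t = (if r = 0 then t powr (1/3)
            else ((sqrt (8 + t powr (2*r)) + t powr r) / 4) powr (1/r))"

end

theory Submission
  imports Defs "HOL-Real_Asymp.Real_Asymp" "HOL-Analysis.Analysis"
begin


lemma ser_exp: fixes k x :: real shows "(\<lambda>n. k^n * (x^n / fact n)) sums exp (k*x)"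
proof -
  have "(\<lambda>n. (k*x)^n /\<^sub>R fact n) sums exp (k*x)" by (rule exp_converges)
  moreover have "(\<lambda>n. (k*x)^n /\<^sub>R fact n) = (\<lambda>n. k^n * (x^n / fact n))"
    by (rule ext) (simp add: real_scaleR_def power_mult_distrib field_simps)
  ultimately show ?thesis by simp
qed

lemma fact_aux: fixes a x :: real shows "x * (a * (x^n / fact n)) = real (Suc n) * a * (x^(Suc n) / fact (Suc n))"
proof -
  have e: "x^(Suc n) / fact (Suc n) = (x * x^n) / (real (Suc n) * fact n)" by simp
  have "real (Suc n) \<noteq> 0" by simp
  moreover have "(fact n :: real) \<noteq> 0" by simp
  moreover have "(fact n :: real) + fact n * real n \<noteq> 0"
    by (metis add_cancel_right_right fact_gt_zero less_irrefl mult_eq_0_iff of_nat_0_le_iff add_pos_nonneg mult_nonneg_nonneg fact_ge_zero)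
  ultimately show ?thesis unfolding e by (simp add: field_simps)
qed

lemma ser_xexp: fixes k x :: real shows "(\<lambda>n. (real n * k^(n-1)) * (x^n / fact n)) sums (x * exp (k*x))"
proof -
  define g where "g = (\<lambda>n. (real n * k^(n-1)) * (x^n / fact n))"
  have "(\<lambda>n. x * (k^n * (x^n / fact n))) sums (x * exp (k*x))"
    by (rule sums_mult[OF ser_exp])
  moreover have "(\<lambda>n. x * (k^n * (x^n / fact n))) = (\<lambda>n. g (Suc n))"
    by (auto simp: fun_eq_iff fact_aux g_def)
  ultimately have "(\<lambda>n. g (Suc n)) sums (x * exp (k*x))" by simp
  hence "g sums (x * exp (k*x) + g 0)" by (simp only: sums_Suc_iff)
  thus ?thesis by (simp add: g_def)
qed

lemma ser_x2exp: fixes k x :: real shows "(\<lambda>n. (real n * (real n - 1) * k^(n-2)) * (x^n / fact n)) sums (x^2 * exp (k*x))"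
proof -
  define g where "g = (\<lambda>n. (real n * (real n - 1) * k^(n-2)) * (x^n / fact n))"
  have "(\<lambda>n. x * ((real n * k^(n-1)) * (x^n / fact n))) sums (x * (x * exp (k*x)))"
    by (rule sums_mult[OF ser_xexp])
  moreover have "(\<lambda>n. x * ((real n * k^(n-1)) * (x^n / fact n))) = (\<lambda>n. g (Suc n))"
    by (auto simp: fun_eq_iff fact_aux[where a="real _ * _"] g_def mult.assoc)
  ultimately have "(\<lambda>n. g (Suc n)) sums (x * (x * exp (k*x)))" by simp
  hence "g sums (x * (x * exp (k*x)) + g 0)" by (simp only: sums_Suc_iff)
  thus ?thesis by (simp add: g_def power2_eq_square mult.assoc)
qed

definition tc :: "nat \<Rightarrow> real" where
 "tc n = (3/2)*(3^n - 1 - (-1)^n + (-3)^n) - 6 * (real n * 1^(n-1) - real n * (-1)^(n-1))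
   + (3/4)*(real n * 2^(n-1) - real n * (-2)^(n-1)) + 2 * (real n * (real n - 1) * 0^(n-2))
   - (5/2) * (real n * (real n - 1) * 2^(n-2) + real n * (real n - 1) * (-2)^(n-2))"

lemma pe: "(a::real)^(2*m) = (a^2)^m" by (rule power_mult)

lemma pe2: "(a::real)^(m*2) = (a^2)^m" by (simp add: power_mult[symmetric] mult.commute)

lemma tc_odd: "tc (2*m+1) = 0"
  apply (cases m)
  apply (simp add: tc_def)
  apply (simp add: tc_def power_add pe)
  done

lemma tc_even: "tc (2*m+2) = 27*9^m - 27 - 24*real m - (real m+1)*(20*real m+4)*4^m + (if m = 0 then 4 else 0)"
  by (cases m) (simp_all add: tc_def power_add pe pe2 algebra_simps)

lemma natpoly: "m \<ge> (3::nat) \<Longrightarrow> 4*((m+2)*(20*m+24)) \<le> 9*((m+1)*(20*m+4))"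
proof -
  assume "m \<ge> 3"
  then obtain k where "m = k + 3" by (metis add.commute le_Suc_ex)
  thus ?thesis by (simp add: algebra_simps)
qed

lemma natineq: "m \<ge> (3::nat) \<Longrightarrow> 27 + 24*m + (m+1)*(20*m+4)*4^m < 27*9^m"
proof (induction m rule: nat_induct_at_least)
  case base
  then show ?case by simp
next
  case (Suc m)
  have a: "4*((m+2)*(20*m+24)) * 4^m \<le> 9*((m+1)*(20*m+4)) * 4^m"
    using natpoly[OF Suc.hyps(1)] by (rule mult_right_mono) simp
  have "27 + 24*Suc m + (Suc m+1)*(20*Suc m+4)*4^Suc m = 51 + 24*m + 4*((m+2)*(20*m+24)) * 4^m"
    by (simp add: algebra_simps)
  also have "\<dots> \<le> 51 + 24*m + 9*((m+1)*(20*m+4)) * 4^m" using a by simp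
  also have "\<dots> < 9 * (27 + 24*m + (m+1)*(20*m+4)*4^m)" by (simp add: algebra_simps)
  also have "\<dots> < 9 * (27*9^m)" using Suc.IH by simp
  also have "\<dots> = 27*9^Suc m" by simp
  finally show ?case .
qed


lemma tc_nonneg: "tc n \<ge> 0"
proof (cases "even n")
  case True
  then obtain j where j: "n = 2*j" by (auto elim: evenE)
  show ?thesis
  proof (cases j)
    case 0 then show ?thesis using j by (simp add: tc_def)
  next
    case (Suc m)
    hence n: "n = 2*m+2" using j by simp
    show ?thesis
    proof (cases "m \<ge> 3")
      case True
      have "real (27 + 24*m + (m+1)*(20*m+4)*4^m) < real (27*9^m)"
        using natineq[OF True] by (simp only: of_nat_less_iff)
      hence "27 + 24*real m + (real m+1)*(20*real m+4)*4^m < 27*9^m" by (simp add: algebra_simps)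
      then show ?thesis unfolding n tc_even using True by simp
    next
      case False
      hence "m = 0 \<or> m = 1 \<or> m = 2" by auto
      then show ?thesis unfolding n tc_even by auto
    qed
  qed
next
  case False
  then obtain m where "n = 2*m+1" by (auto elim: oddE)
  then show ?thesis using tc_odd[of m] by simp
qed

lemma tc_8: "tc 8 > 0"
proof -
  have "tc (2*3+2) = 27*9^3 - 27 - 24*3 - (3+1)*(20*3+4)*4^3" by (simp only: tc_even) simp
  thus ?thesis by simp
qed

lemma ser_pos:
  fixes x :: real
  assumes "(\<lambda>n. c n * (x^n / fact n)) sums T" "x > 0" "\<And>n. c n \<ge> 0" "c i > 0"
  shows "T > 0"
proof -
  have "T = (\<Sum>n. c n * (x^n / fact n))" using assms(1) by (simp add: sums_unique)
  also have "\<dots> > 0"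
    apply (rule suminf_pos2[where i=i])
    using assms by (auto simp: sums_summable intro!: mult_nonneg_nonneg mult_pos_pos)
  finally show ?thesis .
qed

lemma T_pos:
  fixes x :: real
  assumes "x > 0"
  shows "5*x*(x*(sinh x^2 + cosh x^2) - sinh x * cosh x) < 2*(6* sinh x - x)*(sinh x * cosh x - x)"
proof -
  define t where "t = (\<lambda>n::nat. x^n / fact n)"
  have s: "(\<lambda>n. (3/2)*((3^n * t n - 1^n * t n) - (((-1)^n * t n) - (-3)^n * t n))
     - 6 * ((real n * 1^(n-1)) * t n - (real n * (-1)^(n-1)) * t n)
     + (3/4) * ((real n * 2^(n-1)) * t n - (real n * (-2)^(n-1)) * t n)
     + 2 * ((real n * (real n - 1) * 0^(n-2)) * t n)
     - (5/2) * ((real n * (real n - 1) * 2^(n-2)) * t n + (real n * (real n - 1) * (-2)^(n-2)) * t n))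
    sums ((3/2)*((exp (3*x) - exp (1*x)) - (exp ((-1)*x) - exp ((-3)*x)))
     - 6 * (x * exp (1*x) - x * exp ((-1)*x))
     + (3/4) * (x * exp (2*x) - x * exp ((-2)*x))
     + 2 * (x^2 * exp (0*x))
     - (5/2) * (x^2 * exp (2*x) + x^2 * exp ((-2)*x)))"
    unfolding t_def
    by (intro sums_add sums_diff sums_mult ser_exp ser_xexp ser_x2exp)
  have f: "(\<lambda>n. tc n * (x^n / fact n)) = (\<lambda>n. (3/2)*((3^n * t n - 1^n * t n) - (((-1)^n * t n) - (-3)^n * t n))
     - 6 * ((real n * 1^(n-1)) * t n - (real n * (-1)^(n-1)) * t n)
     + (3/4) * ((real n * 2^(n-1)) * t n - (real n * (-2)^(n-1)) * t n)
     + 2 * ((real n * (real n - 1) * 0^(n-2)) * t n)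
     - (5/2) * ((real n * (real n - 1) * 2^(n-2)) * t n + (real n * (real n - 1) * (-2)^(n-2)) * t n))"
    unfolding t_def tc_def by (rule ext) (simp add: algebra_simps)
  define E where "E = exp x"
  have E: "E > 0" unfolding E_def by simp
  have ex: "exp (3*x) = E^3" "exp (1*x) = E" "exp ((-1)*x) = 1/E" "exp ((-3)*x) = 1/E^3"
     "exp (2*x) = E^2" "exp ((-2)*x) = 1/E^2" "exp (0*x) = 1"
    unfolding E_def by (simp_all add: exp_of_nat_mult[symmetric] exp_minus field_simps)
  have sh: "sinh x = (E - 1/E)/2" "cosh x = (E + 1/E)/2"
    unfolding E_def by (simp_all add: sinh_field_def cosh_field_def exp_minus field_simps)
  have T: "(\<lambda>n. tc n * (x^n / fact n)) sums (2*(6* sinh x - x)*(sinh x * cosh x - x) - 5*x*(x*(sinh x^2 + cosh x^2) - sinh x * cosh x))"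
  proof -
    have "(2*(6* sinh x - x)*(sinh x * cosh x - x) - 5*x*(x*(sinh x^2 + cosh x^2) - sinh x * cosh x))
      = ((3/2)*((exp (3*x) - exp (1*x)) - (exp ((-1)*x) - exp ((-3)*x)))
     - 6 * (x * exp (1*x) - x * exp ((-1)*x))
     + (3/4) * (x * exp (2*x) - x * exp ((-2)*x))
     + 2 * (x^2 * exp (0*x))
     - (5/2) * (x^2 * exp (2*x) + x^2 * exp ((-2)*x)))"
      unfolding ex sh using E by (simp add: field_simps power2_eq_square power3_eq_cube)
    thus ?thesis using s f by simp
  qed
  have "2*(6* sinh x - x)*(sinh x * cosh x - x) - 5*x*(x*(sinh x^2 + cosh x^2) - sinh x * cosh x) > 0"
    by (rule ser_pos[OF T assms tc_nonneg tc_8])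
  thus ?thesis by simp
qed



definition lc :: "nat \<Rightarrow> real" where
 "lc n = (1/2)*(real n * 2^(n-1) + real n * (-2)^(n-1)) + 2*(real n * 0^(n-1)) - (3/4)*(2^n - (-2)^n)"

lemma lc_odd: "lc (2*m+1) = (2*real m - 2)*4^m + (if m = 0 then 2 else 0)"
  by (cases m) (simp_all add: lc_def power_add pe pe2 algebra_simps)

lemma lc_even: "lc (2*m) = 0"
  by (cases m) (simp_all add: lc_def power_add pe pe2 algebra_simps)

lemma lc_nonneg: "lc n \<ge> 0"
proof (cases "even n")
  case True
  then obtain m where "n = 2*m" by (auto elim: evenE)
  then show ?thesis using lc_even[of m] by simp
next
  case False
  then obtain m where n: "n = 2*m+1" by (auto elim: oddE)
  show ?thesis
  proof (cases "m = 0")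
    case True then show ?thesis unfolding n lc_odd by simp
  next
    case False
    hence "real m \<ge> 1" by simp
    then show ?thesis unfolding n lc_odd by simp
  qed
qed

lemma lc_5: "lc 5 > 0"
proof -
  have "lc (2*2+1) = (2*2 - 2)*4^2" by (simp only: lc_odd) simp
  thus ?thesis by simp
qed

lemma L_pos:
  fixes x :: real
  assumes "x > 0"
  shows "3 * (sinh x * cosh x) < x * (2 * cosh x ^ 2 + 1)"
proof -
  define t where "t = (\<lambda>n::nat. x^n / fact n)"
  have s: "(\<lambda>n. (1/2)*((real n * 2^(n-1)) * t n + (real n * (-2)^(n-1)) * t n) + 2*((real n * 0^(n-1)) * t n) - (3/4)*(2^n * t n - (-2)^n * t n))
    sums ((1/2)*(x * exp (2*x) + x * exp ((-2)*x)) + 2*(x * exp (0*x)) - (3/4)*(exp (2*x) - exp ((-2)*x)))"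
    unfolding t_def
    by (intro sums_add sums_diff sums_mult ser_exp ser_xexp ser_x2exp)
  have f: "(\<lambda>n. lc n * (x^n / fact n)) = (\<lambda>n. (1/2)*((real n * 2^(n-1)) * t n + (real n * (-2)^(n-1)) * t n) + 2*((real n * 0^(n-1)) * t n) - (3/4)*(2^n * t n - (-2)^n * t n))"
    unfolding t_def lc_def by (rule ext) (simp add: algebra_simps)
  define E where "E = exp x"
  have E: "E > 0" unfolding E_def by simp
  have ex: "exp (2*x) = E^2" "exp ((-2)*x) = 1/E^2" "exp (0*x) = 1"
    unfolding E_def by (simp_all add: exp_of_nat_mult[symmetric] exp_minus field_simps)
  have sh: "sinh x = (E - 1/E)/2" "cosh x = (E + 1/E)/2"
    unfolding E_def by (simp_all add: sinh_field_def cosh_field_def exp_minus field_simps)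
  have T: "(\<lambda>n. lc n * (x^n / fact n)) sums (x * (2 * cosh x ^ 2 + 1) - 3 * (sinh x * cosh x))"
  proof -
    have "x * (2 * cosh x ^ 2 + 1) - 3 * (sinh x * cosh x) = (1/2)*(x * exp (2*x) + x * exp ((-2)*x)) + 2*(x * exp (0*x)) - (3/4)*(exp (2*x) - exp ((-2)*x))"
      unfolding ex sh using E by (simp add: field_simps power2_eq_square power3_eq_cube)
    thus ?thesis using s f by simp
  qed
  have "x * (2 * cosh x ^ 2 + 1) - 3 * (sinh x * cosh x) > 0"
    by (rule ser_pos[OF T assms lc_nonneg lc_5])
  thus ?thesis by simp
qed

definition sc :: "nat \<Rightarrow> real" where
 "sc n = (1/2)*(1^n - (-1)^n) - real n * 0^(n-1)"

lemma sc_nonneg: "sc n \<ge> 0"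
proof (cases n)
  case 0 then show ?thesis by (simp add: sc_def)
next
  case (Suc k)
  show ?thesis
  proof (cases k)
    case 0 then show ?thesis using Suc by (simp add: sc_def)
  next
    case (Suc j)
    have "(-1::real)^n \<le> 1" by (cases "even n") simp_all
    then show ?thesis using \<open>n = Suc k\<close> Suc by (simp add: sc_def)
  qed
qed

lemma sinh_gt:
  fixes x :: real
  assumes "x > 0"
  shows "x < sinh x"
proof -
  define t where "t = (\<lambda>n::nat. x^n / fact n)"
  have s: "(\<lambda>n. (1/2)*(1^n * t n - (-1)^n * t n) - (real n * 0^(n-1)) * t n)
    sums ((1/2)*(exp (1*x) - exp ((-1)*x)) - x * exp (0*x))"
    unfolding t_def
    by (intro sums_add sums_diff sums_mult ser_exp ser_xexp ser_x2exp)
  have f: "(\<lambda>n. sc n * (x^n / fact n)) = (\<lambda>n. (1/2)*(1^n * t n - (-1)^n * t n) - (real n * 0^(n-1)) * t n)"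
    unfolding t_def sc_def by (rule ext) (simp add: algebra_simps)
  have T: "(\<lambda>n. sc n * (x^n / fact n)) sums (sinh x - x)"
  proof -
    have eq: "(1/2)*(exp (1*x) - exp ((-1)*x)) - x * exp (0*x) = sinh x - x"
      by (simp add: sinh_field_def)
    show ?thesis by (subst f) (subst eq[symmetric], rule s)
  qed
  have "sc 3 > 0" by (simp add: sc_def)
  have "sinh x - x > 0"
    by (rule ser_pos[OF T assms sc_nonneg \<open>sc 3 > 0\<close>])
  thus ?thesis by simp
qed



lemma pos_from_deriv:
  fixes f f' :: "real \<Rightarrow> real"
  assumes d: "\<And>x. x > 0 \<Longrightarrow> (f has_real_derivative f' x) (at x)"
    and p: "\<And>x. x > 0 \<Longrightarrow> f' x > 0"
    and l: "(f \<longlongrightarrow> 0) (at_right 0)" and x: "x > 0"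
  shows "f x > 0"
proof -
  have inc: "f a < f b" if "0 < a" "a < b" for a b
  proof (rule DERIV_pos_imp_increasing[OF that(2)])
    fix t assume "a \<le> t" "t \<le> b" hence "t > 0" using that by simp
    thus "\<exists>y. (f has_real_derivative y) (at t) \<and> 0 < y" using d p by blast
  qed
  have ev: "eventually (\<lambda>t. f t \<le> f (x/2)) (at_right 0)"
  proof -
    have "eventually (\<lambda>t. t \<in> {0<..<x/2}) (at_right (0::real))"
      by (rule eventually_at_right_real) (use x in simp)
    thus ?thesis
    proof eventually_elim
      case (elim t) thus ?case using inc[of t "x/2"] by auto
    qed
  qed
  have "0 \<le> f (x/2)"
    by (rule tendsto_upperbound[OF l ev]) simp
  also have "f (x/2) < f x" by (rule inc) (use x in auto)
  finally show ?thesis .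
qed

lemma lim0: "((\<lambda>x::real. ln (sinh x) - ln x - ln (cosh x)/3) \<longlongrightarrow> 0) (at_right 0)"
  by real_asymp

lemma lim1: "((\<lambda>x::real. (3/5)*(ln (cosh x) + ln (sinh x) - ln x) - ln (2*exp((6/5)*(ln (sinh x) - ln x)) - 1)) \<longlongrightarrow> 0) (at_right 0)"
  by real_asymp

lemma laz:
  fixes x :: real assumes x: "x > 0"
  shows "cosh x powr (1/3) < sinh x / x"
proof -
  define f where "f = (\<lambda>x::real. ln (sinh x) - ln x - ln (cosh x)/3)"
  define f' where "f' = (\<lambda>x::real. cosh x / sinh x - 1/x - (sinh x / cosh x)/3)"
  have d: "(f has_real_derivative f' y) (at y)" if "y > 0" for y
    unfolding f_def f'_def using that
    by (auto intro!: derivative_eq_intros simp: field_simps)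
  have p: "f' y > 0" if y: "y > 0" for y
  proof -
    have S: "sinh y > 0" using y by simp
    have C: "cosh y > 0" by simp
    have h0: "cosh y^2 = sinh y^2 + 1" by (rule cosh_square_eq)
    have h: "y*(cosh y*cosh y) = y + y*(sinh y* sinh y)" using h0 by (simp add: power2_eq_square algebra_simps)
    have e: "f' y = (y*(2*cosh y^2+1) - 3*(sinh y*cosh y))/(3*y* sinh y*cosh y)"
      unfolding f'_def using S C y
      by (simp add: field_simps power2_eq_square h)
    show ?thesis unfolding e using L_pos[OF y] S C y by (intro divide_pos_pos) auto
  qed
  have "f x > 0" by (rule pos_from_deriv[OF d p lim0[folded f_def] x])
  hence "ln (cosh x)/3 < ln (sinh x / x)" unfolding f_def using x by (simp add: ln_div)
  hence "exp (ln (cosh x)/3) < exp (ln (sinh x / x))" by simp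
  thus ?thesis using x by (simp add: powr_def)
qed



lemma young_w:
  fixes s :: real assumes s: "s > 0"
  shows "(6* s - 1)/5 \<le> exp ((6/5) * ln s)"
proof -
  define w where "w = exp ((6/5) * ln s)"
  have w: "w > 0" unfolding w_def by simp
  have "w powr (5/6) * 1 powr (1/6) \<le> (5/6)*w + (1/6)*1"
    by (rule Youngs_inequality_0) (use w in auto)
  moreover have "w powr (5/6) = s" unfolding w_def powr_def using s by simp
  ultimately show ?thesis unfolding w_def[symmetric] by simp
qed

lemma up35:
  fixes x :: real assumes x: "x > 0"
  shows "2*((sinh x/x) powr (3/5))^2 - (sinh x/x) powr (3/5) * cosh x powr (3/5) < 1"
proof -
  define W where "W = (\<lambda>y::real. exp((6/5)*(ln (sinh y) - ln y)))"
  define f where "f = (\<lambda>x::real. (3/5)*(ln (cosh x) + ln (sinh x) - ln x) - ln (2*exp((6/5)*(ln (sinh x) - ln x)) - 1))"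
  define f' where "f' = (\<lambda>y::real. (3/5)*(sinh y / cosh y + cosh y / sinh y - 1/y) - (2*W y*((6/5)*(cosh y / sinh y - 1/y)))/(2*W y - 1))"
  have Wgt: "W y > 1" if y: "y > 0" for y
  proof -
    have "sinh y / y > 1" using sinh_gt[OF y] y by simp
    hence "ln (sinh y / y) > 0" by simp
    hence "ln (sinh y) - ln y > 0" using y by (simp add: ln_div)
    hence "(6/5)*(ln (sinh y) - ln y) > 0" by simp
    hence "exp ((6/5)*(ln (sinh y) - ln y)) > 1" by (simp only: one_less_exp_iff)
    thus ?thesis unfolding W_def .
  qed
  have d: "(f has_real_derivative f' y) (at y)" if y: "y > 0" for y
  proof -
    have "0 < 2*exp((6/5)*(ln (sinh y) - ln y)) - 1" using Wgt[OF y] unfolding W_def by linarith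
    thus ?thesis
      unfolding f_def f'_def W_def using y
      by (auto intro!: derivative_eq_intros simp: field_simps)
  qed
  have p: "f' y > 0" if y: "y > 0" for y
  proof -
    define S where "S = sinh y"
    define C where "C = cosh y"
    define w where "w = W y"
    have S: "S > 0" using y unfolding S_def by simp
    have C: "C \<ge> 1" unfolding C_def by (rule cosh_real_ge_1)
    have w: "w > 1" unfolding w_def by (rule Wgt[OF y])
    have h0: "C^2 = S^2 + 1" unfolding C_def S_def by (rule cosh_square_eq)
    have h: "y*(C*C) = y + y*(S* S)" using h0 by (simp add: power2_eq_square algebra_simps)
    have e: "f' y = (3/5) * ((2*w*(S*C - y) - (y*(S^2+C^2) - S*C)) / (y* S*C*(2*w-1)))"
      unfolding f'_def w_def[symmetric] S_def[symmetric] C_def[symmetric] using S C y w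
      by (simp add: field_simps power2_eq_square) (use h0 in algebra)
    have wb: "(6*S - y)/(5*y) \<le> w"
    proof -
      have a: "(6*(S/y) - 1)/5 \<le> exp ((6/5) * ln (S/y))" by (rule young_w) (use S y in simp)
      have b: "(6*(S/y) - 1)/5 = (6*S - y)/(5*y)" using y by (simp add: field_simps)
      have c: "exp ((6/5) * ln (S/y)) = w"
        unfolding w_def W_def S_def using S y by (simp add: ln_div S_def)
      show ?thesis using a unfolding b c .
    qed
    have Sy: "S > y" unfolding S_def by (rule sinh_gt[OF y])
    have SC: "S*C - y > 0"
    proof -
      have "S*C \<ge> S*1" using C S by (intro mult_left_mono) auto
      thus ?thesis using Sy by simp
    qed
    have T: "5*y*(y*(S^2 + C^2) - S*C) < 2*(6* S - y)*(S*C - y)"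
      unfolding S_def C_def by (rule T_pos[OF y])
    have wb2: "2*((6* S - y)/(5*y)) \<le> 2*w" using wb by linarith
    have "2*((6* S - y)/(5*y))*(S*C - y) \<le> 2*w*(S*C - y)"
      by (rule mult_right_mono[OF wb2]) (use SC in simp)
    moreover have "2*((6* S - y)/(5*y))*(S*C - y) = (2*(6* S - y)*(S*C - y))/(5*y)" by simp
    moreover have "(y*(S^2 + C^2) - S*C) < (2*(6* S - y)*(S*C - y))/(5*y)"
      using T y by (simp add: field_simps)
    ultimately have num: "2*w*(S*C - y) - (y*(S^2+C^2) - S*C) > 0" by linarith
    have den: "y* S*C*(2*w-1) > 0" using y S C w by (intro mult_pos_pos) auto
    have "(2*w*(S*C - y) - (y*(S^2+C^2) - S*C)) / (y* S*C*(2*w-1)) > 0"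
      using num den by (rule divide_pos_pos)
    hence "(3/5) * ((2*w*(S*C - y) - (y*(S^2+C^2) - S*C)) / (y* S*C*(2*w-1))) > 0"
      by (rule mult_pos_pos[rotated]) simp
    thus ?thesis unfolding e .
  qed
  have "f x > 0" by (rule pos_from_deriv[OF d p lim1[folded f_def] x])
  define s where "s = sinh x / x"
  have s: "s > 1" unfolding s_def using sinh_gt[OF x] x by simp
  have lns: "ln s = ln (sinh x) - ln x" unfolding s_def using x by (simp add: ln_div)
  have "ln (2*exp((6/5)*ln s) - 1) < (3/5)*(ln (cosh x) + ln s)"
    using \<open>f x > 0\<close> unfolding f_def lns by simp
  moreover have "2*exp((6/5)*ln s) - 1 > 0"
  proof -
    have "(6/5)*ln s > 0" using s by simp
    hence "exp((6/5)*ln s) > 1" by (simp only: one_less_exp_iff)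
    thus ?thesis by linarith
  qed
  ultimately have "2*exp((6/5)*ln s) - 1 < exp ((3/5)*(ln (cosh x) + ln s))"
    by (metis exp_less_mono exp_ln)
  moreover have "exp ((3/5)*(ln (cosh x) + ln s)) = s powr (3/5) * cosh x powr (3/5)"
    using s by (simp add: powr_def exp_add[symmetric] algebra_simps)
  moreover have "exp((6/5)*ln s) = (s powr (3/5))^2"
    using s by (simp add: powr_def exp_add[symmetric] power2_eq_square)
  ultimately show ?thesis unfolding s_def[symmetric] by simp
qed



lemma keyeq:
  fixes u v :: real assumes u: "u > 0" and v: "v > 0"
  shows "(4 * u - v < sqrt (8 + v^2)) \<longleftrightarrow> (2 * u^2 - u * v < 1)"
proof (cases "4 * u - v < 0")
  case True
  have "sqrt (8 + v^2) \<ge> 0" by simp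
  hence a: "4 * u - v < sqrt (8 + v^2)" using True by linarith
  have "u * (2 * u - v) < 0" using True u by (intro mult_pos_neg) auto
  moreover have "u * (2 * u - v) = 2 * u^2 - u * v" by (simp add: power2_eq_square algebra_simps)
  ultimately have b: "2 * u^2 - u * v < 1" by linarith
  show ?thesis using a b by simp
next
  case False
  have "(4 * u - v < sqrt (8 + v^2)) \<longleftrightarrow> sqrt ((4 * u - v)^2) < sqrt (8 + v^2)"
    using False by simp
  also have "\<dots> \<longleftrightarrow> (4 * u - v)^2 < 8 + v^2" by (rule real_sqrt_less_iff)
  also have "\<dots> \<longleftrightarrow> 2 * u^2 - u * v < 1"
  proof -
    have eq: "(4*u-v)^2 = 8*(2 * u^2 - u * v) + v^2" by (simp add: power2_eq_square algebra_simps)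
    have gen: "\<And>X V::real. (8*X + V < 8 + V) \<longleftrightarrow> X < 1" by auto
    show ?thesis unfolding eq by (rule gen)
  qed
  finally show ?thesis .
qed

definition Q :: "real \<Rightarrow> real \<Rightarrow> real \<Rightarrow> real" where
  "Q r s c = 2 * (s powr r)^2 - s powr r * c powr r"

lemma M_pos: fixes r c :: real assumes "c > 0"
  shows "(sqrt (8 + c powr (2*r)) + c powr r) / 4 > 0"
proof -
  have "sqrt (8 + c powr (2*r)) > 0" using assms by (simp add: add_pos_nonneg)
  moreover have "c powr r > 0" using assms by simp
  ultimately have "sqrt (8 + c powr (2*r)) + c powr r > 0" by linarith
  thus ?thesis by simp
qed

lemma M_less_iff:
  fixes r s c :: real assumes s: "s > 0" and c: "c > 0"
  shows "(s powr r < (sqrt (8 + c powr (2*r)) + c powr r) / 4) \<longleftrightarrow> Q r s c < 1"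
proof -
  have e: "c powr (2*r) = (c powr r)^2" using c by (simp add: powr_mult_base power2_eq_square flip: powr_add)
  have "(s powr r < (sqrt (8 + c powr (2*r)) + c powr r) / 4) \<longleftrightarrow> (4 * s powr r - c powr r < sqrt (8 + (c powr r)^2))"
    unfolding e by auto
  also have "\<dots> \<longleftrightarrow> Q r s c < 1" unfolding Q_def by (rule keyeq) (use s c in auto)
  finally show ?thesis .
qed

lemma H_pos:
  fixes r s c :: real assumes r: "r > 0" and s: "s > 0" and c: "c > 0"
  shows "(s < H r c) \<longleftrightarrow> Q r s c < 1"
proof -
  define M where "M = (sqrt (8 + c powr (2*r)) + c powr r) / 4"
  have M: "M > 0" unfolding M_def by (rule M_pos[OF c])
  have hH: "H r c = M powr (1/r)" using r unfolding H_def M_def by simp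
  have lm: "ln (M powr (1/r)) = ln M / r" using M by (simp add: ln_powr)
  have mp: "M powr (1/r) > 0" using M by simp
  have "(s < H r c) \<longleftrightarrow> ln s < ln M / r"
  proof -
    have "(s < H r c) \<longleftrightarrow> (s < M powr (1/r))" using hH by simp
    also have "\<dots> \<longleftrightarrow> ln (s) < ln (M powr (1/r))" by (rule ln_less_cancel_iff[symmetric]) (use s mp in auto)
    finally show ?thesis unfolding lm[symmetric] .
  qed
  also have "\<dots> \<longleftrightarrow> r * ln s < ln M" using r by (simp add: field_simps)
  also have "\<dots> \<longleftrightarrow> s powr r < M"
  proof -
    have pe: "s powr r = exp (r * ln s)" using s by (simp add: powr_def mult.commute)
    show ?thesis unfolding pe by (metis M exp_less_cancel_iff exp_ln)
  qed
  also have "\<dots> \<longleftrightarrow> Q r s c < 1" unfolding M_def by (rule M_less_iff[OF s c])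
  finally show ?thesis .
qed

lemma H_neg:
  fixes r s c :: real assumes r: "r < 0" and s: "s > 0" and c: "c > 0"
  shows "(H r c < s) \<longleftrightarrow> Q r s c < 1"
proof -
  define M where "M = (sqrt (8 + c powr (2*r)) + c powr r) / 4"
  have M: "M > 0" unfolding M_def by (rule M_pos[OF c])
  have hH: "H r c = M powr (1/r)" using r unfolding H_def M_def by simp
  have lm: "ln (M powr (1/r)) = ln M / r" using M by (simp add: ln_powr)
  have mp: "M powr (1/r) > 0" using M by simp
  have "(H r c < s) \<longleftrightarrow> ln M / r < ln s"
  proof -
    have "(H r c < s) \<longleftrightarrow> (M powr (1/r) < s)" using hH by simp
    also have "\<dots> \<longleftrightarrow> ln (M powr (1/r)) < ln (s)" by (rule ln_less_cancel_iff[symmetric]) (use s mp in auto)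
    finally show ?thesis unfolding lm[symmetric] .
  qed
  also have "\<dots> \<longleftrightarrow> r * ln s < ln M" using r by (simp add: field_simps)
  also have "\<dots> \<longleftrightarrow> s powr r < M"
  proof -
    have pe: "s powr r = exp (r * ln s)" using s by (simp add: powr_def mult.commute)
    show ?thesis unfolding pe by (metis M exp_less_cancel_iff exp_ln)
  qed
  also have "\<dots> \<longleftrightarrow> Q r s c < 1" unfolding M_def by (rule M_less_iff[OF s c])
  finally show ?thesis .
qed



lemma bern:
  fixes y k :: real assumes y: "y > 0" and k: "k \<ge> 1"
  shows "1 + k * (y - 1) \<le> y powr k"
proof -
  have "(y powr k) powr (1/k) * 1 powr (1 - 1/k) \<le> (1/k) * y powr k + (1 - 1/k) * 1"
    by (rule Youngs_inequality_0) (use y k in auto)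
  moreover have "(y powr k) powr (1/k) = y" using k y by (simp add: powr_powr)
  ultimately have "y \<le> (1/k) * y powr k + (1 - 1/k)" by simp
  hence "k * y \<le> k * ((1/k) * y powr k + (1 - 1/k))" using k by simp
  also have "\<dots> = y powr k + k - 1" using k by (simp add: field_simps)
  finally show ?thesis by (simp add: algebra_simps)
qed

lemma mono_up:
  fixes s c p k :: real
  assumes s: "s > 1" and c: "c > 0" and p: "p > 0" and k: "k \<ge> 1" and q: "Q p s c < 1"
  shows "Q (p * k) s c < 1"
proof -
  define u where "u = s powr p"
  define v where "v = c powr p"
  have "1 powr p < s powr p" by (rule powr_less_mono2) (use p s in auto)
  hence u: "u > 1" unfolding u_def by simp
  have v: "v > 0" unfolding v_def using c by simp
  have qq: "2 * u^2 - u * v < 1" using q unfolding Q_def u_def v_def .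
  have "u * (2 * u - 1/u) = 2 * u^2 - 1" using u by (simp add: field_simps power2_eq_square)
  hence "u * (2 * u - 1/u) < u * v" using qq by linarith
  hence av: "2 * u - 1/u < v" using u by simp
  define z where "z = 1/u^2"
  have z: "z > 0" "z < 1" unfolding z_def using u by (auto simp: field_simps)
  have a: "2 * u - 1/u = u * (2 - z)" unfolding z_def using u by (simp add: field_simps power2_eq_square)
  have apos: "2 - z > 0" using z by simp
  define U where "U = u powr k"
  have U: "U > 0" unfolding U_def using u by simp
  have b1: "1 + k * ((2-z) - 1) \<le> (2-z) powr k" by (rule bern) (use z k in auto)
  have b2: "1 + k * (z - 1) \<le> z powr k" by (rule bern) (use z k in auto)
  have u2: "(u^2) powr k = (u powr k)^2" using u by (simp add: power2_eq_square powr_mult)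
  have zk: "z powr k = 1/U^2"
    unfolding z_def U_def using u by (simp add: powr_divide u2)
  have "(2-z) powr k \<ge> 2 - 1/U^2" using b1 b2 zk by (simp add: algebra_simps)
  hence "U * (2 - 1/U^2) \<le> U * (2-z) powr k" using U by simp
  also have "\<dots> = (2 * u - 1/u) powr k" unfolding a U_def using u apos by (simp add: powr_mult)
  also have "\<dots> < v powr k"
  proof -
    have "1/u < 1" using u by simp
    hence "0 \<le> 2 * u - 1/u" using u by linarith
    thus ?thesis by (rule powr_less_mono2[rotated]) (use k av in auto)
  qed
  finally have "U * (2 - 1/U^2) < v powr k" .
  moreover have "U * (2 - 1/U^2) = 2 * U - 1/U" using U by (simp add: field_simps power2_eq_square)
  ultimately have "2 * U - 1/U < v powr k" by simp
  hence "U * (2 * U - 1/U) < U * v powr k" using U by (rule mult_strict_left_mono)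
  moreover have "U * (2 * U - 1/U) = 2 * U^2 - 1" using U by (simp add: field_simps power2_eq_square)
  ultimately have "2 * U^2 - U * v powr k < 1" by linarith
  moreover have "s powr (p * k) = U" unfolding U_def u_def by (simp add: powr_powr)
  moreover have "c powr (p * k) = v powr k" unfolding v_def by (simp add: powr_powr)
  ultimately show ?thesis unfolding Q_def by simp
qed

lemma lower:
  fixes a x :: real assumes a: "a \<le> 0" and x: "x > 0"
  shows "H a (cosh x) < sinh x / x"
proof (cases "a = 0")
  case True
  then show ?thesis using laz[OF x] by (simp add: H_def)
next
  case False
  hence a: "a < 0" using a by simp
  define s where "s = sinh x / x"
  define c where "c = cosh x"
  have s: "s > 0" unfolding s_def using x by simp
  have c: "c > 1" unfolding c_def using x cosh_real_ge_1[of x] cosh_real_one_iff[of x] by linarith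
  define u where "u = s powr a"
  define w where "w = c powr (a/3)"
  have u: "u > 0" unfolding u_def using s by simp
  have l: "c powr (1/3) < s" unfolding c_def s_def by (rule laz[OF x])
  have "s powr a < (c powr (1/3)) powr a" by (rule powr_less_mono2_neg[OF a _ l]) (use c in simp)
  hence uw: "u < w" unfolding u_def w_def by (simp add: powr_powr)
  have w1: "w < 1" unfolding w_def by (rule powr_less_one) (use c a in auto)
  have v: "c powr a = w^3"
  proof -
    have "c powr a = c powr (a/3 + a/3 + a/3)" by simp
    also have "\<dots> = c powr (a/3) * c powr (a/3) * c powr (a/3)" by (simp only: powr_add)
    also have "\<dots> = w^3" unfolding w_def by (simp add: power3_eq_cube)
    finally show ?thesis .
  qed
  have "u * (2 * u - w^3) < 1"
  proof (cases "2 * u - w^3 \<le> 0")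
    case True
    hence "u * (2 * u - w^3) \<le> 0" using u by (simp add: mult_nonneg_nonpos)
    thus ?thesis by simp
  next
    case False
    have "u * (2 * u - w^3) < w * (2 * w - w^3)"
      by (rule mult_strict_mono) (use False uw u in auto)
    also have "w * (2 * w - w^3) = 1 - (1 - w^2)^2" by (simp add: power2_eq_square power3_eq_cube algebra_simps)
    also have "\<dots> \<le> 1" by simp
    finally show ?thesis .
  qed
  hence "Q a s c < 1" unfolding Q_def u_def[symmetric] v by (simp add: power2_eq_square algebra_simps)
  thus ?thesis using H_neg[OF a s] c unfolding s_def c_def by simp
qed

lemma upper:
  fixes b x :: real assumes b: "b \<ge> 3/5" and x: "x > 0"
  shows "sinh x / x < H b (cosh x)"
proof -
  define s where "s = sinh x / x"
  define c where "c = cosh x"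
  have s: "s > 1" unfolding s_def using sinh_gt[OF x] x by simp
  have c: "c > 0" unfolding c_def by simp
  have q: "Q (3/5) s c < 1" using up35[OF x] unfolding Q_def s_def c_def .
  have "Q ((3/5) * (5 * b/3)) s c < 1" by (rule mono_up[OF s c _ _ q]) (use b in auto)
  hence "Q b s c < 1" by simp
  thus ?thesis using H_pos[of b s c] b s c unfolding s_def c_def by simp
qed



lemma nec_alpha:
  fixes a :: real assumes a: "a > 0"
  shows "\<exists>x>0. \<not> (H a (cosh x) < sinh x / x)"
proof -
  define K where "K = 2 powr (1/a)"
  define x where "x = K + 1"
  have K: "K > 0" unfolding K_def by simp
  have x: "x > 0" unfolding x_def using K by simp
  define s where "s = sinh x / x"
  define c where "c = cosh x"
  have s: "s > 0" unfolding s_def using x by simp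
  have c: "c > 0" unfolding c_def by simp
  have "K * s \<le> sinh x"
  proof -
    have "K * s = (K / x) * sinh x" unfolding s_def by simp
    also have "\<dots> \<le> 1 * sinh x" using K x unfolding x_def by (intro mult_right_mono) (auto simp: less_imp_le)
    finally show ?thesis by simp
  qed
  also have "sinh x < c" unfolding c_def by (rule sinh_less_cosh_real)
  finally have "(K * s) powr a \<le> c powr a" by (intro powr_mono2) (use a K s in auto)
  moreover have "(K * s) powr a = 2 * s powr a" unfolding K_def using a K s
    by (simp add: powr_mult powr_powr)
  ultimately have le: "2 * s powr a \<le> c powr a" by simp
  have "Q a s c = s powr a * (2 * s powr a - c powr a)" unfolding Q_def by (simp add: power2_eq_square algebra_simps)
  also have "\<dots> \<le> 0" using le s by (intro mult_nonneg_nonpos) auto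
  finally have "Q a s c < 1" by simp
  hence "s < H a c" using H_pos[OF a s c] by simp
  thus ?thesis using x unfolding s_def c_def by (intro exI[of _ x]) auto
qed

lemma limQ:
  fixes b :: real
  shows "((\<lambda>x. (2 * exp(2 * b * ln(sinh x/x)) - exp(b * (ln(sinh x/x) + ln(cosh x))) - 1)/x^4) \<longlongrightarrow> b/15 - b * b/9) (at_right 0)"
  by real_asymp

lemma nec_beta:
  fixes b :: real assumes b: "b > 0" "b < 3/5"
  shows "\<exists>x>0. \<not> (sinh x / x < H b (cosh x))"
proof -
  have "b/15 - b * b/9 > 0"
  proof -
    have "b * (1/15 - b/9) > 0" using b by (intro mult_pos_pos) auto
    thus ?thesis by (simp add: algebra_simps)
  qed
  hence "eventually (\<lambda>x. (2 * exp(2 * b * ln(sinh x/x)) - exp(b * (ln(sinh x/x) + ln(cosh x))) - 1)/x^4 > 0) (at_right 0)"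
    by (rule order_tendstoD(1)[OF limQ])
  moreover have "eventually (\<lambda>x. x \<in> {0<..<1}) (at_right (0::real))"
    by (rule eventually_at_right_real) simp
  ultimately have "eventually (\<lambda>x. x > 0 \<and> (2 * exp(2 * b * ln(sinh x/x)) - exp(b * (ln(sinh x/x) + ln(cosh x))) - 1)/x^4 > 0) (at_right 0)"
    by eventually_elim simp
  then obtain x where x: "x > 0" and F: "(2 * exp(2 * b * ln(sinh x/x)) - exp(b * (ln(sinh x/x) + ln(cosh x))) - 1)/x^4 > 0"
    using eventually_happens'[OF trivial_limit_at_right_real] by blast
  define s where "s = sinh x / x"
  define c where "c = cosh x"
  have s: "s > 0" unfolding s_def using x by simp
  have c: "c > 0" unfolding c_def by simp
  have "2 * exp(2 * b * ln s) - exp(b * (ln s + ln c)) - 1 > 0"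
    using F x unfolding s_def[symmetric] c_def[symmetric] by (simp add: zero_less_divide_iff)
  moreover have "exp(2 * b * ln s) = (s powr b)^2" using s by (simp add: powr_def power2_eq_square exp_add[symmetric])
  moreover have "exp(b * (ln s + ln c)) = s powr b * c powr b" using s c by (simp add: powr_def exp_add[symmetric] algebra_simps)
  ultimately have "\<not> Q b s c < 1" unfolding Q_def by simp
  hence "\<not> s < H b c" using H_pos[OF b(1) s c] by simp
  thus ?thesis using x unfolding s_def c_def by (intro exI[of _ x]) auto
qed

theorem corollary4p8:
  fixes \<alpha> \<beta> :: real
  shows "(\<forall>x::real. x > 0 \<longrightarrow>
            H \<alpha> (cosh x) < sinh x / x \<and> sinh x / x < H \<beta> (cosh x))
         \<longleftrightarrow> (\<alpha> \<le> 0 \<and> \<beta> \<ge> 3/5)"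
proof
  assume A: "\<forall>x::real. x > 0 \<longrightarrow> H \<alpha> (cosh x) < sinh x / x \<and> sinh x / x < H \<beta> (cosh x)"
  have "\<alpha> \<le> 0"
  proof (rule ccontr)
    assume "\<not> \<alpha> \<le> 0"
    hence "\<alpha> > 0" by simp
    then obtain x where x: "x > 0" and n: "\<not> (H \<alpha> (cosh x) < sinh x / x)" using nec_alpha by blast
    have "H \<alpha> (cosh x) < sinh x / x" using A x by blast
    thus False using n by contradiction
  qed
  moreover have "\<beta> \<ge> 3/5"
  proof (rule ccontr)
    assume nb: "\<not> \<beta> \<ge> 3/5"
    show False
    proof (cases "\<beta> \<le> 0")
      case True
      have l: "H \<beta> (cosh 1) < sinh 1 / 1" by (rule lower[OF True]) simp
      have "sinh 1 / 1 < H \<beta> (cosh 1)" using A by (meson zero_less_one)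
      thus False using l by linarith
    next
      case False
      hence "\<beta> > 0" "\<beta> < 3/5" using nb by auto
      then obtain x where x: "x > 0" and n: "\<not> (sinh x / x < H \<beta> (cosh x))" using nec_beta by blast
      have "sinh x / x < H \<beta> (cosh x)" using A x by blast
      thus False using n by contradiction
    qed
  qed
  ultimately show "\<alpha> \<le> 0 \<and> \<beta> \<ge> 3/5" by (rule conjI)
next
  assume B: "\<alpha> \<le> 0 \<and> \<beta> \<ge> 3/5"
  show "\<forall>x::real. x > 0 \<longrightarrow> H \<alpha> (cosh x) < sinh x / x \<and> sinh x / x < H \<beta> (cosh x)"
  proof (intro allI impI conjI)
    fix x :: real assume x: "x > 0"
    show "H \<alpha> (cosh x) < sinh x / x" using lower[OF _ x] B by blast
    show "sinh x / x < H \<beta> (cosh x)" using upper[OF _ x] B by blast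
  qed
qed


end
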